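(* Let $N>K$ and let $\mathbf{d}_u=(d_1,\dots,d_K)$ be a demand vector with pairwise distinct entries. Let the cache configuration $\mathcal{C}$ be produced by the new placement scheme with $F=\lceil N/M\rceil F'$ packets per file, and let $t=K/\lceil N/M\rceil$. If $$F\le \frac{\lceil N/M\rceil}{2K}\left(1-\frac{1}{\lceil N/M\rceil}\right)\exp\!\left(2t\Big(1-\frac{t}{K}\Big)\Big(1-\frac1K\Big)\right),$$ then $$\mathbb{E}\big[R^{nd}(\mathcal{C},\mathbf{d}_u)\big]\ge \frac12\Big(1-\frac{M}{N}\Big)K,$$ where the expectation is over the random placement.
   Context: Setting: a server holds a library of $N$ files, each split into $F$ packets (packet $f$ of file $n$ denoted $(n,f)$); $K$ users each have a cache holding $M$ files' worth of packets ($M\le N$). For a cache configuration, $S_{n,f}\subseteq[1:K]$ denotes the set of users whose cache stores packet $(n,f)$. User $k$ requests file $d_k$. New placement scheme: $F=\lceil N/M\rceil F'$ with $F'$ a positive integer; the packets of every file are partitioned into $F'$ groups of $\lceil N/M\rceil$ packets each. For every user $k$, file $n$ and group of file $n$, exactly one packet of that group is chosen uniformly at random and stored in user $k$'s cache; all choices are mutually independent. Delivery scheme and its rate $R^{nd}$: for $k\in[1:K]$ and $T\subseteq[1:K]\setminus\{k\}$, let $V_{k,T}$ be the set of packets $f$ of file $d_k$ with $S_{d_k,f}=T$ exactly. For every nonempty $\mathcal{S}\subseteq[1:K]$ the scheme transmits the XOR of the packet vectors $V_{k,\mathcal{S}\setminus\{k\}}$, $k\in\mathcal{S}$ (shorter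 vectors zero-padded to the longest). Its normalized number of transmissions is $$R^{nd}(\mathcal{C},\mathbf{d})=\sum_{\emptyset\ne\mathcal{S}\subseteq[1:K]}\frac{\max_{k\in\mathcal{S}}|V_{k,\mathcal{S}\setminus\{k\}}|}{F}.$$ *)

theory Defs
  imports "HOL-Probability.Probability"
begin

(* Users are 1..K, files 1..N, packets of a file are 0..<F.
   A cache configuration is given by Sset n f = set of users caching packet (n,f). *)

definition Vset :: "nat \<Rightarrow> (nat \<Rightarrow> nat \<Rightarrow> nat set) \<Rightarrow> (nat \<Rightarrow> nat) \<Rightarrow> nat \<Rightarrow> nat set \<Rightarrow> nat set" where
  "Vset F Sset d k T = {f \<in> {0..<F}. Sset (d k) f = T}"

definition R_nd :: "nat \<Rightarrow> nat \<Rightarrow> (nat \<Rightarrow> nat \<Rightarrow> nat set) \<Rightarrow> (nat \<Rightarrow> nat) \<Rightarrow> real" where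
  "R_nd K F Sset d =
     (\<Sum>S\<in>{S. S \<subseteq> {1..K} \<and> S \<noteq> {}}.
        real (Max ((\<lambda>k. card (Vset F Sset d k (S - {k}))) ` S)) / real F)"

(* New placement: q = ceil(N/M) packets per group, F' groups per file, F = q*F'.
   A random choice c(k,n,g) \<in> {0..<q} selects which packet of group g of file n
   user k stores; packet f lies in group f div q at position f mod q. *)
definition placement_choices :: "nat \<Rightarrow> nat \<Rightarrow> nat \<Rightarrow> nat \<Rightarrow> (nat \<times> nat \<times> nat \<Rightarrow> nat) set" where
  "placement_choices K N F' q = ({1..K} \<times> {1..N} \<times> {0..<F'}) \<rightarrow>\<^sub>E {0..<q}"

definition cache_of_choice :: "nat \<Rightarrow> nat \<Rightarrow> (nat \<times> nat \<times> nat \<Rightarrow> nat) \<Rightarrow> nat \<Rightarrow> nat \<Rightarrow> nat set" where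
  "cache_of_choice K q c n f = {k \<in> {1..K}. c (k, n, f div q) = f mod q}"

end

theory Submission
  imports Defs
begin


lemma max_ge:
  fixes a :: "nat \<Rightarrow> nat"
  assumes "finite S" "S \<noteq> {}"
  shows "(\<Sum>k\<in>S. a k) \<le> Max (a ` S) + (\<Sum>k\<in>S. \<Sum>k'\<in>S-{k}. a k * a k')"
proof -
  obtain k0 where k0: "k0 \<in> S" "a k0 = Max (a ` S)"
    using assms by (metis (mono_tags, lifting) Max_in finite_imageI image_iff image_is_empty)
  have le: "a k \<le> a k0" if "k \<in> S" for k using k0 assms that by simp
  have "(\<Sum>k\<in>S. a k) = a k0 + (\<Sum>k\<in>S-{k0}. a k)"
    using assms k0 by (simp add: sum.remove)
  also have "(\<Sum>k\<in>S-{k0}. a k) \<le> (\<Sum>k\<in>S-{k0}. a k * a k0)"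
  proof (rule sum_mono)
    fix k assume "k \<in> S - {k0}"
    then have "a k \<le> a k0" using le by auto
    then show "a k \<le> a k * a k0" by (cases "a k0 = 0") auto
  qed
  also have "\<dots> \<le> (\<Sum>k\<in>S-{k0}. \<Sum>k'\<in>S-{k}. a k * a k')"
  proof (rule sum_mono)
    fix k assume "k \<in> S - {k0}"
    then have "k0 \<in> S - {k}" using k0 by auto
    then show "a k * a k0 \<le> (\<Sum>k'\<in>S-{k}. a k * a k')"
      using assms by (intro member_le_sum) auto
  qed
  also have "\<dots> \<le> (\<Sum>k\<in>S. \<Sum>k'\<in>S-{k}. a k * a k')"
    using assms by (intro sum_mono2) auto
  finally show ?thesis using k0 by simp
qed

lemma card_ind: "card {x\<in>A. P x} = (\<Sum>x\<in>A. if P x then 1 else (0::nat))" if "finite A"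
  using that by (simp add: sum.If_cases Int_def)

lemma Sc_sub: "cache_of_choice K q c n f \<subseteq> {1..K}"
  unfolding cache_of_choice_def by auto

lemma sum_over_subset:
  fixes G :: "nat \<Rightarrow> 'b::comm_monoid_add"
  assumes "S \<subseteq> J" "finite J"
  shows "(\<Sum>k\<in>S. G k) = (\<Sum>k\<in>J. if k \<in> S then G k else 0)"
proof -
  have "{k\<in>J. k \<in> S} = S" using assms by auto
  then show ?thesis using assms by (simp add: sum.inter_filter[symmetric])
qed

lemma SS_single:
  assumes "k \<in> {1..K}"
  shows "{S\<in>{S. S \<subseteq> {1..K} \<and> S \<noteq> {}}. k \<in> S \<and> cache_of_choice K q c n f = S - {k}}
       = (if k \<notin> cache_of_choice K q c n f then {insert k (cache_of_choice K q c n f)} else {})"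
  using assms Sc_sub[of K q c n f] by auto

lemma lemB:
  fixes K q F :: nat and c d
  defines "Sc \<equiv> cache_of_choice K q c"
  shows "(\<Sum>S\<in>{S. S \<subseteq> {1..K} \<and> S \<noteq> {}}. \<Sum>k\<in>S. card (Vset F Sc d k (S-{k})))
       = (\<Sum>k\<in>{1..K}. card {f\<in>{0..<F}. k \<notin> Sc (d k) f})"
proof -
  let ?SS = "{S. S \<subseteq> {1..K} \<and> S \<noteq> {}}"
  have fin: "finite ?SS" by simp
  have "(\<Sum>S\<in>?SS. \<Sum>k\<in>S. card (Vset F Sc d k (S-{k})))
      = (\<Sum>S\<in>?SS. \<Sum>k\<in>{1..K}. if k \<in> S then card (Vset F Sc d k (S-{k})) else 0)"
    by (intro sum.cong refl sum_over_subset) auto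
  also have "\<dots> = (\<Sum>k\<in>{1..K}. \<Sum>S\<in>?SS. if k \<in> S then card (Vset F Sc d k (S-{k})) else 0)"
    by (rule sum.swap)
  also have "\<dots> = (\<Sum>k\<in>{1..K}. card {f\<in>{0..<F}. k \<notin> Sc (d k) f})"
  proof (rule sum.cong[OF refl])
    fix k assume k: "k \<in> {1..K}"
    have "(\<Sum>S\<in>?SS. if k \<in> S then card (Vset F Sc d k (S-{k})) else 0)
        = (\<Sum>S\<in>?SS. \<Sum>f\<in>{0..<F}. if k \<in> S \<and> Sc (d k) f = S - {k} then 1 else 0)"
      unfolding Vset_def card_ind[OF finite_atLeastLessThan] by (intro sum.cong refl) auto
    also have "\<dots> = (\<Sum>f\<in>{0..<F}. \<Sum>S\<in>?SS. if k \<in> S \<and> Sc (d k) f = S - {k} then 1 else 0)"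
      by (rule sum.swap)
    also have "\<dots> = (\<Sum>f\<in>{0..<F}. if k \<notin> Sc (d k) f then 1 else 0)"
    proof (rule sum.cong[OF refl])
      fix f
      show "(\<Sum>S\<in>?SS. if k \<in> S \<and> Sc (d k) f = S - {k} then 1 else 0) = (if k \<notin> Sc (d k) f then 1 else (0::nat))"
        using SS_single[OF k, of q c "d k" f] fin unfolding Sc_def
        by (simp add: card_ind[symmetric])
    qed
    also have "\<dots> = card {f\<in>{0..<F}. k \<notin> Sc (d k) f}" unfolding card_ind[OF finite_atLeastLessThan] ..
    finally show "(\<Sum>S\<in>?SS. if k \<in> S then card (Vset F Sc d k (S-{k})) else 0) = card {f\<in>{0..<F}. k \<notin> Sc (d k) f}" .
  qed
  finally show ?thesis .
qed


lemma lemB2: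
  assumes k: "k \<in> {1..K}"
  shows "card {f\<in>{0..<q*F'}. k \<notin> cache_of_choice K q c n f} \<ge> q*F' - F'"
proof -
  let ?A = "{f\<in>{0..<q*F'}. c (k, n, f div q) = f mod q}"
  have eq: "{f\<in>{0..<q*F'}. k \<notin> cache_of_choice K q c n f} = {0..<q*F'} - ?A"
    using k unfolding cache_of_choice_def by auto
  have inj: "inj_on (\<lambda>f. f div q) ?A"
  proof (rule inj_onI)
    fix x y assume "x \<in> ?A" "y \<in> ?A" "x div q = y div q"
    then show "x = y" by (metis (mono_tags, lifting) div_mod_decomp mem_Collect_eq)
  qed
  have img: "(\<lambda>f. f div q) ` ?A \<subseteq> {0..<F'}"
    by (auto simp: less_mult_imp_div_less mult.commute)
  have "card ?A \<le> F'" using card_inj_on_le[OF inj img] by simp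
  moreover have "card ({0..<q*F'} - ?A) = q*F' - card ?A"
    by (subst card_Diff_subset) auto
  ultimately show ?thesis using eq by simp
qed

definition Ecol where
  "Ecol Sc d k k' f f' \<longleftrightarrow> k \<notin> Sc (d k) f \<and> k' \<notin> Sc (d k') f' \<and> insert k (Sc (d k) f) = insert k' (Sc (d k') f')"

lemma SS_double:
  assumes "k \<in> {1..K}" "k' \<in> {1..K}" "A \<subseteq> {1..K}" "B \<subseteq> {1..K}"
  shows "{S\<in>{S. S \<subseteq> {1..K} \<and> S \<noteq> {}}. k \<in> S \<and> k' \<in> S \<and> A = S - {k} \<and> B = S - {k'}}
       = (if k \<notin> A \<and> k' \<notin> B \<and> insert k A = insert k' B then {insert k A} else {})"
  using assms by auto

lemma lemC:
  fixes K q F :: nat and c d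
  defines "Sc \<equiv> cache_of_choice K q c"
  shows "(\<Sum>S\<in>{S. S \<subseteq> {1..K} \<and> S \<noteq> {}}. \<Sum>k\<in>S. \<Sum>k'\<in>S-{k}.
            card (Vset F Sc d k (S-{k})) * card (Vset F Sc d k' (S-{k'})))
       = (\<Sum>k\<in>{1..K}. \<Sum>k'\<in>{1..K}-{k}. \<Sum>f\<in>{0..<F}. \<Sum>f'\<in>{0..<F}. if Ecol Sc d k k' f f' then 1 else 0)"
proof -
  let ?SS = "{S. S \<subseteq> {1..K} \<and> S \<noteq> {}}"
  let ?P = "\<lambda>k S. card (Vset F Sc d k (S-{k}))"
  have fin: "finite ?SS" by simp
  have "(\<Sum>S\<in>?SS. \<Sum>k\<in>S. \<Sum>k'\<in>S-{k}. ?P k S * ?P k' S)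
      = (\<Sum>S\<in>?SS. \<Sum>k\<in>{1..K}. \<Sum>k'\<in>{1..K}-{k}. if k \<in> S \<and> k' \<in> S then ?P k S * ?P k' S else 0)"
  proof (rule sum.cong[OF refl])
    fix S assume S: "S \<in> ?SS"
    have "(\<Sum>k\<in>S. \<Sum>k'\<in>S-{k}. ?P k S * ?P k' S) = (\<Sum>k\<in>{1..K}. if k \<in> S then (\<Sum>k'\<in>S-{k}. ?P k S * ?P k' S) else 0)"
      using S by (intro sum_over_subset) auto
    also have "\<dots> = (\<Sum>k\<in>{1..K}. \<Sum>k'\<in>{1..K}-{k}. if k \<in> S \<and> k' \<in> S then ?P k S * ?P k' S else 0)"
    proof (rule sum.cong[OF refl])
      fix k assume "k \<in> {1..K}"
      have "(\<Sum>k'\<in>S-{k}. ?P k S * ?P k' S) = (\<Sum>k'\<in>{1..K}-{k}. if k' \<in> S - {k} then ?P k S * ?P k' S else 0)"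
        using S by (intro sum_over_subset) auto
      then show "(if k \<in> S then (\<Sum>k'\<in>S-{k}. ?P k S * ?P k' S) else 0) = (\<Sum>k'\<in>{1..K}-{k}. if k \<in> S \<and> k' \<in> S then ?P k S * ?P k' S else 0)"
        by (auto intro!: sum.cong)
    qed
    finally show "(\<Sum>k\<in>S. \<Sum>k'\<in>S-{k}. ?P k S * ?P k' S) = (\<Sum>k\<in>{1..K}. \<Sum>k'\<in>{1..K}-{k}. if k \<in> S \<and> k' \<in> S then ?P k S * ?P k' S else 0)" .
  qed
  also have "\<dots> = (\<Sum>k\<in>{1..K}. \<Sum>S\<in>?SS. \<Sum>k'\<in>{1..K}-{k}. if k \<in> S \<and> k' \<in> S then ?P k S * ?P k' S else 0)"
    by (rule sum.swap)
  also have "\<dots> = (\<Sum>k\<in>{1..K}. \<Sum>k'\<in>{1..K}-{k}. \<Sum>S\<in>?SS. if k \<in> S \<and> k' \<in> S then ?P k S * ?P k' S else 0)"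
    by (intro sum.cong refl sum.swap)
  also have "\<dots> = (\<Sum>k\<in>{1..K}. \<Sum>k'\<in>{1..K}-{k}. \<Sum>f\<in>{0..<F}. \<Sum>f'\<in>{0..<F}. if Ecol Sc d k k' f f' then 1 else 0)"
  proof (intro sum.cong refl)
    fix k k' assume k: "k \<in> {1..K}" and k': "k' \<in> {1..K} - {k}"
    have "(\<Sum>S\<in>?SS. if k \<in> S \<and> k' \<in> S then ?P k S * ?P k' S else 0)
      = (\<Sum>S\<in>?SS. \<Sum>f\<in>{0..<F}. \<Sum>f'\<in>{0..<F}. if k \<in> S \<and> k' \<in> S \<and> Sc (d k) f = S - {k} \<and> Sc (d k') f' = S - {k'} then 1 else 0)"
    proof (rule sum.cong[OF refl])
      fix S
      have "?P k S * ?P k' S = (\<Sum>f\<in>{0..<F}. if Sc (d k) f = S - {k} then 1 else 0) * (\<Sum>f'\<in>{0..<F}. if Sc (d k') f' = S - {k'} then 1 else 0)"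
        unfolding Vset_def card_ind[OF finite_atLeastLessThan] ..
      also have "\<dots> = (\<Sum>f\<in>{0..<F}. \<Sum>f'\<in>{0..<F}. if Sc (d k) f = S - {k} \<and> Sc (d k') f' = S - {k'} then 1 else 0)"
        unfolding sum_product by (intro sum.cong refl) simp
      finally show "(if k \<in> S \<and> k' \<in> S then ?P k S * ?P k' S else 0) = (\<Sum>f\<in>{0..<F}. \<Sum>f'\<in>{0..<F}. if k \<in> S \<and> k' \<in> S \<and> Sc (d k) f = S - {k} \<and> Sc (d k') f' = S - {k'} then 1 else 0)"
        by auto
    qed
    also have "\<dots> = (\<Sum>f\<in>{0..<F}. \<Sum>S\<in>?SS. \<Sum>f'\<in>{0..<F}. if k \<in> S \<and> k' \<in> S \<and> Sc (d k) f = S - {k} \<and> Sc (d k') f' = S - {k'} then 1 else 0)"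
      by (rule sum.swap)
    also have "\<dots> = (\<Sum>f\<in>{0..<F}. \<Sum>f'\<in>{0..<F}. \<Sum>S\<in>?SS. if k \<in> S \<and> k' \<in> S \<and> Sc (d k) f = S - {k} \<and> Sc (d k') f' = S - {k'} then 1 else 0)"
      by (intro sum.cong refl sum.swap)
    also have "\<dots> = (\<Sum>f\<in>{0..<F}. \<Sum>f'\<in>{0..<F}. if Ecol Sc d k k' f f' then 1 else 0)"
    proof (intro sum.cong refl)
      fix f f'
      have "(\<Sum>S\<in>?SS. if k \<in> S \<and> k' \<in> S \<and> Sc (d k) f = S - {k} \<and> Sc (d k') f' = S - {k'} then 1 else 0)
          = card {S\<in>?SS. k \<in> S \<and> k' \<in> S \<and> Sc (d k) f = S - {k} \<and> Sc (d k') f' = S - {k'}}"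
        by (rule card_ind[OF fin, symmetric])
      also have "\<dots> = (if Ecol Sc d k k' f f' then 1 else 0)"
      proof -
        have sub: "Sc n g \<subseteq> {1..K}" for n g unfolding Sc_def by (rule Sc_sub)
        have "{S\<in>?SS. k \<in> S \<and> k' \<in> S \<and> Sc (d k) f = S - {k} \<and> Sc (d k') f' = S - {k'}}
           = (if k \<notin> Sc (d k) f \<and> k' \<notin> Sc (d k') f' \<and> insert k (Sc (d k) f) = insert k' (Sc (d k') f') then {insert k (Sc (d k) f)} else {})"
          using k k' sub by (intro SS_double) auto
        then show ?thesis by (simp add: Ecol_def)
      qed
      finally show "(\<Sum>S\<in>?SS. if k \<in> S \<and> k' \<in> S \<and> Sc (d k) f = S - {k} \<and> Sc (d k') f' = S - {k'} then 1 else 0) = (if Ecol Sc d k k' f f' then 1 else (0::nat))" .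
    qed
    finally show "(\<Sum>S\<in>?SS. if k \<in> S \<and> k' \<in> S then ?P k S * ?P k' S else 0) = (\<Sum>f\<in>{0..<F}. \<Sum>f'\<in>{0..<F}. if Ecol Sc d k k' f f' then 1 else 0)" .
  qed
  finally show ?thesis .
qed



lemma count_le:
  fixes R :: "nat \<Rightarrow> nat \<Rightarrow> nat \<Rightarrow> bool" and K N F' q :: nat
  assumes n: "n \<in> {1..N}" and n': "n' \<in> {1..N}" and nn: "n \<noteq> n'" and g: "g < F'" and g': "g' < F'"
  defines "I \<equiv> {1..K} \<times> {1..N} \<times> {0..<F'}"
  shows "card {c \<in> PiE I (\<lambda>_. {0..<q}). \<forall>j\<in>{1..K}. R j (c (j,n,g)) (c (j,n',g'))}
     \<le> (\<Prod>j\<in>{1..K}. card {xy \<in> {0..<q}\<times>{0..<q}. R j (fst xy) (snd xy)}) * q ^ (card I - 2*K)"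
proof -
  let ?J = "{1..K}" and ?Q = "{0..<q}"
  let ?Rs = "\<lambda>j. {xy \<in> ?Q\<times>?Q. R j (fst xy) (snd xy)}"
  define P where "P = (\<lambda>j. (j,n,g)) ` ?J \<union> (\<lambda>j. (j,n',g')) ` ?J"
  define \<Phi> where "\<Phi> = (\<lambda>c::nat\<times>nat\<times>nat\<Rightarrow>nat. (restrict (\<lambda>j. (c(j,n,g), c(j,n',g'))) ?J, restrict c (I - P)))"
  let ?E = "{c \<in> PiE I (\<lambda>_. ?Q). \<forall>j\<in>?J. R j (c (j,n,g)) (c (j,n',g'))}"
  let ?T = "PiE ?J ?Rs \<times> PiE (I - P) (\<lambda>_. ?Q)"
  have PI: "P \<subseteq> I" using n n' g g' unfolding P_def I_def by auto
  have finI: "finite I" unfolding I_def by simp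
  have cardP: "card P = 2*K"
  proof -
    have "card P = card ((\<lambda>j. (j,n,g)) ` ?J) + card ((\<lambda>j. (j,n',g')) ` ?J)"
      unfolding P_def using nn by (intro card_Un_disjoint) auto
    also have "\<dots> = K + K" by (subst card_image, auto simp: inj_on_def)+
    finally show ?thesis by simp
  qed
  have mem: "(j,n,g) \<in> I" "(j,n',g') \<in> I" if "j \<in> ?J" for j
    using that n n' g g' unfolding I_def by auto
  have sub: "\<Phi> ` ?E \<subseteq> ?T"
  proof
    fix y assume "y \<in> \<Phi> ` ?E"
    then obtain c where c: "c \<in> ?E" and y: "y = \<Phi> c" by auto
    have "restrict (\<lambda>j. (c(j,n,g), c(j,n',g'))) ?J \<in> PiE ?J ?Rs"
      unfolding restrict_PiE_iff using c mem by (auto simp: PiE_iff)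
    moreover have "restrict c (I - P) \<in> PiE (I - P) (\<lambda>_. ?Q)"
      unfolding restrict_PiE_iff using c by (auto simp: PiE_iff)
    ultimately show "y \<in> ?T" unfolding y \<Phi>_def by simp
  qed
  have inj: "inj_on \<Phi> ?E"
  proof (rule inj_onI)
    fix c1 c2 assume c1: "c1 \<in> ?E" and c2: "c2 \<in> ?E" and eq: "\<Phi> c1 = \<Phi> c2"
    have e1: "\<And>j. j \<in> ?J \<Longrightarrow> c1 (j,n,g) = c2 (j,n,g) \<and> c1 (j,n',g') = c2 (j,n',g')"
      using eq unfolding \<Phi>_def by (metis (no_types, lifting) fst_conv prod.inject restrict_apply')
    have e2: "\<And>i. i \<in> I - P \<Longrightarrow> c1 i = c2 i"
      using eq unfolding \<Phi>_def by (metis (no_types, lifting) snd_conv restrict_apply')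
    show "c1 = c2"
    proof (rule PiE_ext)
      show "c1 \<in> PiE I (\<lambda>_. ?Q)" "c2 \<in> PiE I (\<lambda>_. ?Q)" using c1 c2 by auto
      fix i assume i: "i \<in> I"
      show "c1 i = c2 i"
      proof (cases "i \<in> P")
        case True
        then show ?thesis unfolding P_def using e1 by auto
      next
        case False
        then show ?thesis using e2 i by auto
      qed
    qed
  qed
  have "card ?E \<le> card ?T"
    by (rule card_inj_on_le[OF inj sub]) (use finI in \<open>auto intro!: finite_PiE\<close>)
  also have "card ?T = (\<Prod>j\<in>?J. card (?Rs j)) * q ^ (card I - 2*K)"
    using finI PI cardP by (simp add: card_cartesian_product card_PiE card_Diff_subset finite_subset)
  finally show ?thesis .
qed


lemma card_R1:
  assumes "a < q" "b < (q::nat)"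
  shows "card {xy \<in> {0..<q}\<times>{0..<q}. fst xy \<noteq> a \<and> snd xy = b} = q - 1"
proof -
  have "{xy \<in> {0..<q}\<times>{0..<q}. fst xy \<noteq> a \<and> snd xy = b} = ({0..<q}-{a}) \<times> {b}"
    using assms by auto
  then show ?thesis using assms by (simp add: card_cartesian_product)
qed

lemma card_R2:
  assumes "a < q" "b < (q::nat)"
  shows "card {xy \<in> {0..<q}\<times>{0..<q}. fst xy = a \<and> snd xy \<noteq> b} = q - 1"
proof -
  have "{xy \<in> {0..<q}\<times>{0..<q}. fst xy = a \<and> snd xy \<noteq> b} = {a} \<times> ({0..<q}-{b})"
    using assms by auto
  then show ?thesis using assms by (simp add: card_cartesian_product)
qed

lemma card_R3:
  assumes "a < q" "b < (q::nat)"
  shows "card {xy \<in> {0..<q}\<times>{0..<q}. (fst xy = a) = (snd xy = b)} = 1 + (q - 1)^2"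
proof -
  have "{xy \<in> {0..<q}\<times>{0..<q}. (fst xy = a) = (snd xy = b)} = insert (a,b) (({0..<q}-{a}) \<times> ({0..<q}-{b}))"
    using assms by auto
  then show ?thesis using assms by (simp add: card_cartesian_product power2_eq_square)
qed

lemma Ecol_R:
  assumes "Ecol (cache_of_choice K q c) d k k' f f'" "k \<in> {1..K}" "k' \<in> {1..K}" "k \<noteq> k'" "j \<in> {1..K}"
  shows "(if j = k then c (j, d k, f div q) \<noteq> f mod q \<and> c (j, d k', f' div q) = f' mod q
          else if j = k' then c (j, d k, f div q) = f mod q \<and> c (j, d k', f' div q) \<noteq> f' mod q
          else (c (j, d k, f div q) = f mod q) = (c (j, d k', f' div q) = f' mod q))"
proof -
  let ?A = "cache_of_choice K q c (d k) f" and ?B = "cache_of_choice K q c (d k') f'"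
  have E: "k \<notin> ?A" "k' \<notin> ?B" "insert k ?A = insert k' ?B" using assms(1) by (auto simp: Ecol_def)
  have iff: "j \<in> insert k ?A \<longleftrightarrow> j \<in> insert k' ?B" using E(3) by simp
  have A: "x \<in> ?A \<longleftrightarrow> c (x, d k, f div q) = f mod q" if "x \<in> {1..K}" for x
    using that by (simp add: cache_of_choice_def)
  have B: "x \<in> ?B \<longleftrightarrow> c (x, d k', f' div q) = f' mod q" if "x \<in> {1..K}" for x
    using that by (simp add: cache_of_choice_def)
  have kB: "k \<in> ?B" using E assms(4) by (metis insertCI insertE)
  have k'A: "k' \<in> ?A" using E assms(4) by (metis insertCI insertE)
  show ?thesis
    using iff A[OF assms(5)] B[OF assms(5)] E(1,2) kB k'A A[OF assms(2)] B[OF assms(2)] A[OF assms(3)] B[OF assms(3)]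
    by auto
qed


lemma lemD:
  fixes K N F' q :: nat
  assumes q: "0 < q" and k: "k \<in> {1..K}" and k': "k' \<in> {1..K}" and kk: "k \<noteq> k'"
    and n: "d k \<in> {1..N}" and n': "d k' \<in> {1..N}" and nn: "d k \<noteq> d k'"
    and f: "f < q*F'" and f': "f' < q*F'"
  shows "real (card {c \<in> placement_choices K N F' q. Ecol (cache_of_choice K q c) d k k' f f'})
          / real (card (placement_choices K N F' q))
        \<le> (1/q)^2 * (1-1/q)^2 * (1 - 2*(1/q)*(1-1/q))^(K-2)"
proof -
  define I where "I = {1..K} \<times> {1..N} \<times> {0..<F'}"
  define R where "R = (\<lambda>j x y. if j = k then x \<noteq> f mod q \<and> y = f' mod q
          else if j = k' then x = f mod q \<and> y \<noteq> f' mod q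
          else (x = f mod q) = (y = f' mod q))"
  let ?Rs = "\<lambda>j. {xy \<in> {0..<q}\<times>{0..<q}. R j (fst xy) (snd xy)}"
  have g: "f div q < F'" and g': "f' div q < F'" using f f' q
    by (auto simp: less_mult_imp_div_less mult.commute)
  have ab: "f mod q < q" "f' mod q < q" using q by auto
  have Om: "placement_choices K N F' q = PiE I (\<lambda>_. {0..<q})"
    unfolding placement_choices_def I_def ..
  have sub: "{c \<in> placement_choices K N F' q. Ecol (cache_of_choice K q c) d k k' f f'}
     \<subseteq> {c \<in> PiE I (\<lambda>_. {0..<q}). \<forall>j\<in>{1..K}. R j (c (j,d k,f div q)) (c (j,d k',f' div q))}"
    unfolding Om R_def using Ecol_R[OF _ k k' kk] by blast
  have cnt: "card {c \<in> placement_choices K N F' q. Ecol (cache_of_choice K q c) d k k' f f'}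
     \<le> (\<Prod>j\<in>{1..K}. card (?Rs j)) * q ^ (card I - 2*K)"
  proof -
    have fin: "finite {c \<in> PiE I (\<lambda>_. {0..<q}). \<forall>j\<in>{1..K}. R j (c (j,d k,f div q)) (c (j,d k',f' div q))}"
    proof -
      have "finite (PiE I (\<lambda>_. {0..<q}))" unfolding I_def by (intro finite_PiE) auto
      then show ?thesis by simp
    qed
    show ?thesis
      using card_mono[OF fin sub] count_le[OF n n' nn g g', where R=R and K=K and q=q] unfolding I_def
      by linarith
  qed
  have K2: "2 \<le> K" using k k' kk by auto
  have N2: "2 \<le> N" using n n' nn by auto
  have F1: "1 \<le> F'" using g by auto
  have cI: "card I = K * (N * F')" unfolding I_def by (simp add: card_cartesian_product)
  have cI2: "2*K \<le> card I" unfolding cI using N2 F1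
    by (metis mult.commute mult_le_mono1 mult_le_mono2 nat_mult_1_right order_trans)
  have cOm: "card (placement_choices K N F' q) = q ^ card I"
    unfolding Om by (simp add: card_PiE I_def)
  have prodeq: "(\<Prod>j\<in>{1..K}. card (?Rs j)) = (q-1) * ((q-1) * (1+(q-1)^2)^(K-2))"
  proof -
    have "(\<Prod>j\<in>{1..K}. card (?Rs j)) = card (?Rs k) * (\<Prod>j\<in>{1..K}-{k}. card (?Rs j))"
      using k by (simp add: prod.remove)
    also have "(\<Prod>j\<in>{1..K}-{k}. card (?Rs j)) = card (?Rs k') * (\<Prod>j\<in>{1..K}-{k}-{k'}. card (?Rs j))"
      using k' kk by (subst prod.remove[of _ k']) auto
    also have "(\<Prod>j\<in>{1..K}-{k}-{k'}. card (?Rs j)) = (\<Prod>j\<in>{1..K}-{k}-{k'}. 1+(q-1)^2)"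
      by (intro prod.cong refl) (use card_R3[OF ab] in \<open>auto simp: R_def\<close>)
    also have "\<dots> = (1+(q-1)^2)^(K-2)"
      using k k' kk by (simp add: card_Diff_subset numeral_2_eq_2)
    also have "card (?Rs k) = q - 1" using card_R1[OF ab] by (simp add: R_def)
    also have "card (?Rs k') = q - 1" using card_R2[OF ab] kk by (simp add: R_def)
    finally show ?thesis .
  qed
  have qr: "real q > 0" using q by simp
  have "real (card {c \<in> placement_choices K N F' q. Ecol (cache_of_choice K q c) d k k' f f'})
          / real (card (placement_choices K N F' q))
       \<le> real ((q-1) * ((q-1) * (1+(q-1)^2)^(K-2)) * q ^ (card I - 2*K)) / real (q ^ card I)"
    unfolding cOm using cnt prodeq qr by (intro divide_right_mono) (simp_all del: of_nat_mult of_nat_power)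
  also have "\<dots> = real ((q-1) * ((q-1) * (1+(q-1)^2)^(K-2))) / real q ^ (2*K)"
  proof -
    have "real q ^ card I = real q ^ (card I - 2*K) * real q ^ (2*K)"
      using cI2 by (simp add: power_add[symmetric])
    then show ?thesis using qr by (simp add: field_simps)
  qed
  also have "\<dots> = (1/q)^2 * (1-1/q)^2 * (1 - 2*(1/q)*(1-1/q))^(K-2)"
  proof -
    have e: "2*K = 4 + 2*(K-2)" using K2 by simp
    have q1: "real (q - 1) = real q - 1" using q by simp
    have r3: "real q ^ (2*K) = real q ^ 4 * (real q ^ 2) ^ (K-2)"
      unfolding e power_add power_mult by simp
    have r1: "1 - 2*(1/q)*(1-1/q) = (1 + (real q - 1)^2) / real q ^ 2"
      using qr by (simp add: field_simps power2_eq_square)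
    have r2: "(1/real q)^2 * (1-1/q)^2 = (real q - 1)^2 / real q ^ 4"
      using qr by (simp add: field_simps power2_eq_square power4_eq_xxxx)
    show ?thesis unfolding r1 r2 r3 power_divide q1 of_nat_mult of_nat_power of_nat_add
      using qr by (simp add: times_divide_times_eq power2_eq_square field_simps power4_eq_xxxx)
  qed
  finally show ?thesis .
qed



lemma arith_main:
  fixes Q F :: real and K :: nat
  assumes Q: "Q \<ge> 1" and K: "K \<ge> 1" and F0: "F \<ge> 0"
    and F: "F \<le> Q / (2*K) * (1 - 1/Q) * exp (2 * (K-1) * ((1/Q)*(1-1/Q)))"
  shows "K * (K-1) * F * ((1/Q)^2 * (1-1/Q)^2 * (1 - 2*(1/Q)*(1-1/Q))^(K-2)) \<le> K * (1-1/Q) / 2"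
proof (cases "K = 1")
  case True
  then show ?thesis using Q by simp
next
  case False
  then have K2: "K \<ge> 2" using K by simp
  define p where "p = 1/Q"
  define x where "x = p*(1-p)"
  have p0: "0 < p" "p \<le> 1" using Q by (auto simp: p_def)
  have x0: "0 \<le> x" "x \<le> 1/4"
  proof -
    show "0 \<le> x" unfolding x_def using p0 by simp
    have "0 \<le> (p - 1/2) * (p - 1/2)" by simp
    then show "x \<le> 1/4" unfolding x_def by (simp add: algebra_simps)
  qed
  have Kr: "real K \<ge> 2" using K2 by simp
  have F': "F \<le> Q / (2*K) * (1 - p) * exp (2 * (K-1) * x)" using F by (simp add: p_def x_def)
  have pow: "(1 - 2*x)^(K-2) \<le> exp (- 2*x * real (K-2))"
  proof -
    have "(1 - 2*x)^(K-2) \<le> exp (-2*x)^(K-2)"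
      using x0 by (intro power_mono) (auto, smt (verit) exp_ge_add_one_self)
    also have "\<dots> = exp (-2*x * real (K-2))" by (simp add: exp_of_nat_mult[symmetric] mult.commute)
    finally show ?thesis .
  qed
  have Qp: "Q * p^2 = p" using Q by (simp add: p_def power2_eq_square)
  have "K * (K-1) * F * (p^2 * (1-p)^2 * (1 - 2*x)^(K-2))
      \<le> K * (K-1) * (Q / (2*K) * (1 - p) * exp (2 * (K-1) * x)) * (p^2 * (1-p)^2 * exp (- 2*x * real (K-2)))"
  proof -
    let ?Fb = "Q / (2*K) * (1 - p) * exp (2 * (K-1) * x)"
    have C: "p^2 * (1-p)^2 * (1 - 2*x)^(K-2) \<le> p^2 * (1-p)^2 * exp (- 2*x * real (K-2))"
      using pow by (intro mult_left_mono) auto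
    have C0: "0 \<le> p^2 * (1-p)^2 * (1 - 2*x)^(K-2)" using x0 by simp
    have "F * (p^2 * (1-p)^2 * (1 - 2*x)^(K-2)) \<le> ?Fb * (p^2 * (1-p)^2 * exp (- 2*x * real (K-2)))"
      by (rule mult_mono[OF F' C _ C0]) (use F0 F' in linarith)
    then have "(K * (K-1)) * (F * (p^2 * (1-p)^2 * (1 - 2*x)^(K-2))) \<le> (K * (K-1)) * (?Fb * (p^2 * (1-p)^2 * exp (- 2*x * real (K-2))))"
      by (intro mult_left_mono) auto
    then show ?thesis by (simp only: mult.assoc)
  qed
  also have "\<dots> = (K-1)/2 * (1-p) * (x * (1-p) * exp (2*x))"
  proof -
    have "exp (2 * (K-1) * x) * exp (- 2*x * real (K-2)) = exp (2*x)"
      using K2 by (simp add: exp_add[symmetric] of_nat_diff algebra_simps)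
    note eE = this
    have "real K * real (K-1) * (Q / (2*K) * (1 - p) * exp (2 * (K-1) * x)) * (p^2 * (1-p)^2 * exp (- 2*x * real (K-2)))
       = (real (K-1)/2) * (Q*p^2) * ((1-p)*(1-p)^2) * (exp (2 * (K-1) * x) * exp (- 2*x * real (K-2)))"
      using K by (simp add: field_simps)
    also have "\<dots> = (real (K-1)/2) * p * ((1-p)*(1-p)^2) * exp (2*x)" unfolding Qp eE ..
    also have "\<dots> = (K-1)/2 * (1-p) * (x * (1-p) * exp (2*x))"
      unfolding x_def by (simp add: power2_eq_square)
    finally show ?thesis by simp
  qed
  also have "\<dots> \<le> (K-1)/2 * (1-p) * 1"
  proof -
    have e: "exp (2*x) \<le> 2" using exp_bound_half[of "2*x"] x0 by simp
    have "x * (1-p) * exp (2*x) \<le> (1/4) * 1 * 2"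
      using x0 p0 e by (intro mult_mono) auto
    then show ?thesis using p0 K by (intro mult_left_mono) auto
  qed
  also have "\<dots> \<le> K * (1-p) / 2"
  proof -
    have "real (K-1) * (1-p) \<le> real K * (1-p)" using p0 by (intro mult_right_mono) auto
    then show ?thesis by simp
  qed
  finally show ?thesis by (simp add: p_def x_def)
qed



theorem theorem4:
  fixes N K F' :: nat and M :: real and d :: "nat \<Rightarrow> nat"
  assumes "K < N" and "0 < K"
    and "0 < M" and "M \<le> real N"
    and "0 < F'"
    and "\<forall>k\<in>{1..K}. d k \<in> {1..N}" and "inj_on d {1..K}"
    and "q = nat \<lceil>real N / M\<rceil>"
    and "F = q * F'"
    and "t = real K / real q"
    and "real F \<le> real q / (2 * real K) * (1 - 1 / real q)
                   * exp (2 * t * (1 - t / real K) * (1 - 1 / real K))"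
  shows "measure_pmf.expectation (pmf_of_set (placement_choices K N F' q))
           (\<lambda>c. R_nd K F (cache_of_choice K q c) d)
         \<ge> 1/2 * (1 - M / real N) * real K"
proof -
  note KN = assms(1) and K0 = assms(2) and M0 = assms(3) and MN = assms(4) and F'0 = assms(5)
    and dN = assms(6) and dinj = assms(7) and qdef = assms(8) and Fdef = assms(9)
    and tdef = assms(10) and Fb = assms(11)
  let ?J = "{1..K}"
  let ?SS = "{S. S \<subseteq> {1..K} \<and> S \<noteq> {}}"
  define \<Omega> where "\<Omega> = placement_choices K N F' q"
  define P0 where "P0 = (1/real q)^2 * (1-1/real q)^2 * (1 - 2*(1/real q)*(1-1/real q))^(K-2)"
  define Coll where "Coll = (\<lambda>c. (\<Sum>k\<in>?J. \<Sum>k'\<in>?J-{k}. \<Sum>f\<in>{0..<F}. \<Sum>f'\<in>{0..<F}.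
        if Ecol (cache_of_choice K q c) d k k' f f' then 1 else (0::nat)))"
  have NM: "real N / M > 0" using KN K0 M0 by simp
  have qge: "real q \<ge> real N / M" unfolding qdef using NM by linarith
  have q1: "q \<ge> 1" using qge NM by linarith
  have qM: "1 / real q \<le> M / real N"
  proof -
    have "real N \<le> real q * M" using qge M0 by (simp add: field_simps)
    moreover have "real q > 0" "real N > 0" using q1 KN by auto
    ultimately show ?thesis using M0 by (simp add: field_simps)
  qed
  have F1: "F \<ge> 1" using Fdef q1 F'0 by simp
  have finO: "finite \<Omega>" unfolding \<Omega>_def placement_choices_def by (intro finite_PiE) auto
  have neO: "\<Omega> \<noteq> {}" unfolding \<Omega>_def placement_choices_def using q1
    by (simp add: PiE_eq_empty_iff)
  have cO: "real (card \<Omega>) > 0" using finO neO by (simp add: card_gt_0_iff)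
  have perc: "R_nd K F (cache_of_choice K q c) d \<ge> (real K * (real q * F' - F') - real (Coll c)) / real F" for c
  proof -
    define Sc where "Sc = cache_of_choice K q c"
    let ?a = "\<lambda>k S. card (Vset F Sc d k (S-{k}))"
    have maxS: "real (\<Sum>k\<in>S. ?a k S) \<le> real (Max ((\<lambda>k. ?a k S) ` S)) + real (\<Sum>k\<in>S. \<Sum>k'\<in>S-{k}. ?a k S * ?a k' S)"
      if "S \<in> ?SS" for S
    proof -
      have "finite S" using that finite_subset by auto
      then show ?thesis using max_ge[of S "\<lambda>k. ?a k S"] that by (simp only: of_nat_add[symmetric] of_nat_le_iff) auto
    qed
    have "real (\<Sum>S\<in>?SS. \<Sum>k\<in>S. ?a k S) \<le> (\<Sum>S\<in>?SS. real (Max ((\<lambda>k. ?a k S) ` S))) + real (\<Sum>S\<in>?SS. \<Sum>k\<in>S. \<Sum>k'\<in>S-{k}. ?a k S * ?a k' S)"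
    proof -
      have "(\<Sum>S\<in>?SS. real (\<Sum>k\<in>S. ?a k S)) \<le> (\<Sum>S\<in>?SS. real (Max ((\<lambda>k. ?a k S) ` S)) + real (\<Sum>k\<in>S. \<Sum>k'\<in>S-{k}. ?a k S * ?a k' S))"
        by (intro sum_mono maxS)
      then show ?thesis by (simp add: sum.distrib)
    qed
    moreover have "(\<Sum>S\<in>?SS. \<Sum>k\<in>S. \<Sum>k'\<in>S-{k}. ?a k S * ?a k' S) = Coll c"
      unfolding Coll_def Sc_def by (rule lemC)
    moreover have "(\<Sum>S\<in>?SS. \<Sum>k\<in>S. ?a k S) \<ge> K * (q*F' - F')"
    proof -
      have "(\<Sum>S\<in>?SS. \<Sum>k\<in>S. ?a k S) = (\<Sum>k\<in>?J. card {f\<in>{0..<F}. k \<notin> Sc (d k) f})"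
        unfolding Sc_def by (rule lemB)
      also have "\<dots> \<ge> (\<Sum>k\<in>?J. q*F' - F')"
        unfolding Fdef Sc_def by (intro sum_mono lemB2)
      finally show ?thesis by simp
    qed
    moreover have "real (K * (q*F' - F')) = real K * (real q * F' - F')"
    proof -
      have "F' \<le> q * F'" using q1 by simp
      then show ?thesis by (simp add: of_nat_diff)
    qed
    ultimately have "real K * (real q * F' - F') - real (Coll c) \<le> (\<Sum>S\<in>?SS. real (Max ((\<lambda>k. ?a k S) ` S)))"
      by (smt (verit) of_nat_le_iff)
    then have "(real K * (real q * F' - F') - real (Coll c)) / real F \<le> (\<Sum>S\<in>?SS. real (Max ((\<lambda>k. ?a k S) ` S))) / real F"
      using F1 by (intro divide_right_mono) auto
    also have "\<dots> = R_nd K F Sc d" unfolding R_nd_def by (simp add: sum_divide_distrib)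
    finally show ?thesis unfolding Sc_def .
  qed
  have collsum: "real (\<Sum>c\<in>\<Omega>. Coll c) / real (card \<Omega>) \<le> real K * real (K-1) * real F * real F * P0"
  proof -
    have "(\<Sum>c\<in>\<Omega>. Coll c) = (\<Sum>k\<in>?J. \<Sum>k'\<in>?J-{k}. \<Sum>f\<in>{0..<F}. \<Sum>f'\<in>{0..<F}.
        card {c\<in>\<Omega>. Ecol (cache_of_choice K q c) d k k' f f'})"
    proof -
      let ?I = "\<lambda>c k k' f f'. if Ecol (cache_of_choice K q c) d k k' f f' then 1 else (0::nat)"
      have "(\<Sum>c\<in>\<Omega>. Coll c) = (\<Sum>k\<in>?J. \<Sum>c\<in>\<Omega>. \<Sum>k'\<in>?J-{k}. \<Sum>f\<in>{0..<F}. \<Sum>f'\<in>{0..<F}. ?I c k k' f f')"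
        unfolding Coll_def by (rule sum.swap)
      also have "\<dots> = (\<Sum>k\<in>?J. \<Sum>k'\<in>?J-{k}. \<Sum>c\<in>\<Omega>. \<Sum>f\<in>{0..<F}. \<Sum>f'\<in>{0..<F}. ?I c k k' f f')"
        by (intro sum.cong refl sum.swap)
      also have "\<dots> = (\<Sum>k\<in>?J. \<Sum>k'\<in>?J-{k}. \<Sum>f\<in>{0..<F}. \<Sum>c\<in>\<Omega>. \<Sum>f'\<in>{0..<F}. ?I c k k' f f')"
        by (intro sum.cong refl sum.swap)
      also have "\<dots> = (\<Sum>k\<in>?J. \<Sum>k'\<in>?J-{k}. \<Sum>f\<in>{0..<F}. \<Sum>f'\<in>{0..<F}. \<Sum>c\<in>\<Omega>. ?I c k k' f f')"
        by (intro sum.cong refl sum.swap)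
      also have "\<dots> = (\<Sum>k\<in>?J. \<Sum>k'\<in>?J-{k}. \<Sum>f\<in>{0..<F}. \<Sum>f'\<in>{0..<F}. card {c\<in>\<Omega>. Ecol (cache_of_choice K q c) d k k' f f'})"
        by (simp only: card_ind[OF finO])
      finally show ?thesis .
    qed
    then have "real (\<Sum>c\<in>\<Omega>. Coll c) / real (card \<Omega>) = (\<Sum>k\<in>?J. \<Sum>k'\<in>?J-{k}. \<Sum>f\<in>{0..<F}. \<Sum>f'\<in>{0..<F}.
        real (card {c\<in>\<Omega>. Ecol (cache_of_choice K q c) d k k' f f'}) / real (card \<Omega>))"
      by (simp add: sum_divide_distrib)
    also have "\<dots> \<le> (\<Sum>k\<in>?J. \<Sum>k'\<in>?J-{k}. \<Sum>f\<in>{0..<F}. \<Sum>f'\<in>{0..<F}. P0)"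
    proof (intro sum_mono)
      fix k k' f f' assume k: "k \<in> ?J" and k': "k' \<in> ?J - {k}" and f: "f \<in> {0..<F}" and f': "f' \<in> {0..<F}"
      have "d k \<noteq> d k'" using dinj k k' by (auto dest: inj_onD)
      then show "real (card {c\<in>\<Omega>. Ecol (cache_of_choice K q c) d k k' f f'}) / real (card \<Omega>) \<le> P0"
        unfolding \<Omega>_def P0_def using lemD[of q k K k' d N f F' f'] q1 k k' f f' dN Fdef by auto
    qed
    also have "\<dots> = real K * real (K-1) * real F * real F * P0"
      using K0 by (simp add: of_nat_diff)
    finally show ?thesis .
  qed
  have "measure_pmf.expectation (pmf_of_set \<Omega>) (\<lambda>c. R_nd K F (cache_of_choice K q c) d)
      = (\<Sum>c\<in>\<Omega>. R_nd K F (cache_of_choice K q c) d) / real (card \<Omega>)"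
    by (rule integral_pmf_of_set[OF neO finO])
  also have "\<dots> \<ge> (\<Sum>c\<in>\<Omega>. (real K * (real q * F' - F') - real (Coll c)) / real F) / real (card \<Omega>)"
    using cO perc by (intro divide_right_mono sum_mono) auto
  finally have E1: "measure_pmf.expectation (pmf_of_set \<Omega>) (\<lambda>c. R_nd K F (cache_of_choice K q c) d)
      \<ge> (\<Sum>c\<in>\<Omega>. (real K * (real q * F' - F') - real (Coll c)) / real F) / real (card \<Omega>)" .
  have E2: "(\<Sum>c\<in>\<Omega>. (real K * (real q * F' - F') - real (Coll c)) / real F) / real (card \<Omega>)
     = real K * (1 - 1/real q) - (real (\<Sum>c\<in>\<Omega>. Coll c) / real (card \<Omega>)) / real F"
  proof -
    define A where "A = real K * (real q * F' - F')"
    define C where "C = real (card \<Omega>)"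
    define Sg where "Sg = real (\<Sum>c\<in>\<Omega>. Coll c)"
    have s1: "(\<Sum>c\<in>\<Omega>. (A - real (Coll c)) / real F) = (C * A - Sg) / real F"
      unfolding C_def Sg_def by (simp add: sum_divide_distrib[symmetric] sum_subtractf)
    have RF: "real F = real q * real F'" using Fdef by simp
    have s2: "A / real F = real K * (1 - 1/real q)"
    proof -
      have "A = real K * real F' * (real q - 1)" unfolding A_def by (simp add: algebra_simps)
      then show ?thesis unfolding RF using q1 F'0 by (simp add: field_simps)
    qed
    have Fp: "real F > 0" using F1 by simp
    have "(C * A - Sg) / real F / C = A / real F - Sg / C / real F"
      using cO Fp unfolding C_def by (simp add: field_simps)
    then show ?thesis using s1 s2 unfolding A_def C_def Sg_def by simp
  qed
  have expo: "2 * t * (1 - t / real K) * (1 - 1 / real K) = 2 * real (K-1) * ((1/real q)*(1-1/real q))"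
  proof -
    have a: "1 - t/real K = 1 - 1/real q" using K0 unfolding tdef by simp
    have b: "t * (1 - 1/real K) = real (K-1) * (1/real q)"
      using K0 unfolding tdef by (simp add: of_nat_diff divide_simps)
    have "2 * t * (1 - t / real K) * (1 - 1 / real K) = 2 * (t * (1 - 1/real K)) * (1 - t/real K)"
      by (simp only: mult_ac)
    also have "\<dots> = 2 * real (K-1) * ((1/real q)*(1-1/real q))" unfolding a b by (simp only: mult_ac)
    finally show ?thesis .
  qed
  have Fb': "real F \<le> real q / (2*real K) * (1 - 1/real q) * exp (2 * real (K-1) * ((1/real q)*(1-1/real q)))"
    using Fb unfolding expo .
  have ar: "real K * real (K-1) * real F * P0 \<le> real K * (1 - 1/real q) / 2"
  proof -
    have "K * (K-1) * real F * ((1/real q)^2 * (1-1/real q)^2 * (1 - 2*(1/real q)*(1-1/real q))^(K-2)) \<le> K * (1-1/real q) / 2"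
      by (rule arith_main) (use q1 K0 Fb' in auto)
    then show ?thesis unfolding P0_def by simp
  qed
  have "real (\<Sum>c\<in>\<Omega>. Coll c) / real (card \<Omega>) / real F \<le> real K * real (K-1) * real F * P0"
  proof -
    have "real (\<Sum>c\<in>\<Omega>. Coll c) / real (card \<Omega>) / real F \<le> real K * real (K-1) * real F * real F * P0 / real F"
      using collsum F1 by (intro divide_right_mono) auto
    also have "\<dots> = real K * real (K-1) * real F * P0" using F1 by simp
    finally show ?thesis .
  qed
  then have "measure_pmf.expectation (pmf_of_set \<Omega>) (\<lambda>c. R_nd K F (cache_of_choice K q c) d)
      \<ge> real K * (1 - 1/real q) / 2"
    using E1 E2 ar by linarith
  moreover have "real K * (1 - 1/real q) / 2 \<ge> 1/2 * (1 - M / real N) * real K"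
  proof -
    have h: "(1 - M/real N) * real K \<le> (1 - 1/real q) * real K" using qM by (intro mult_right_mono) auto
    then show ?thesis by (simp add: mult.commute)
  qed
  ultimately show ?thesis unfolding \<Omega>_def by linarith
qed


end
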